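(* For every positive integer $N\notin\{1,3\}$, the taxman game on $\{1,\dots,N\}$ can be won: there is a legal move sequence for which the player's final score is strictly greater than the taxman's final total, i.e., strictly greater than $N(N+1)/4$.
   Context: The taxman game on $\{1,\dots,N\}$: initially all integers $1,\dots,N$ are in play. A move consists of picking a number $p$ still in play that has at least one proper divisor still in play; the player adds $p$ to their score, $p$ is removed, and the taxman removes all proper divisors of $p$ still in play and adds them to the taxman's total. When no legal picks remain, the taxman adds all numbers still in play to the taxman's total. The player wins if their final score exceeds the taxman's final total. *)

theory Defs
  imports Main
begin

definition proper_divs_in :: "nat set \<Rightarrow> nat \<Rightarrow> nat set" where
  "proper_divs_in S p = {d \<in> S. d dvd p \<and> d \<noteq> p}"

definition legal_pick :: "nat set \<Rightarrow> nat \<Rightarrow> bool" where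
  "legal_pick S p \<longleftrightarrow> p \<in> S \<and> proper_divs_in S p \<noteq> {}"

definition after_pick :: "nat set \<Rightarrow> nat \<Rightarrow> nat set" where
  "after_pick S p = S - {p} - proper_divs_in S p"

fun legal_seq :: "nat set \<Rightarrow> nat list \<Rightarrow> bool" where
  "legal_seq S [] = True"
| "legal_seq S (p # ps) = (legal_pick S p \<and> legal_seq (after_pick S p) ps)"

fun final_state :: "nat set \<Rightarrow> nat list \<Rightarrow> nat set" where
  "final_state S [] = S"
| "final_state S (p # ps) = final_state (after_pick S p) ps"

definition player_score :: "nat list \<Rightarrow> nat" where
  "player_score ps = sum_list ps"

fun taxman_total :: "nat set \<Rightarrow> nat list \<Rightarrow> nat" where
  "taxman_total S [] = \<Sum>S"
| "taxman_total S (p # ps) = \<Sum>(proper_divs_in S p) + taxman_total (after_pick S p) ps"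

definition complete_game :: "nat \<Rightarrow> nat list \<Rightarrow> bool" where
  "complete_game N ps \<longleftrightarrow> legal_seq {1..N} ps \<and>
     (\<forall>q. \<not> legal_pick (final_state {1..N} ps) q)"

end

theory Submission
  imports Defs Complex_Main
begin


lemma after_pick_eq: "after_pick S p = {d \<in> S. \<not> d dvd p}"
  unfolding after_pick_def proper_divs_in_def by auto

lemma taxman_cons:
  assumes "finite S" "legal_seq S ps"
  shows "taxman_total S ps + sum_list ps = \<Sum>S"
  using assms
proof (induction ps arbitrary: S)
  case Nil then show ?case by simp
next
  case (Cons p ps)
  have pS: "p \<in> S" using Cons.prems(2) unfolding legal_seq.simps legal_pick_def by blast
  have fin: "finite (after_pick S p)" using Cons.prems(1) unfolding after_pick_def by simp
  have IH: "taxman_total (after_pick S p) ps + sum_list ps = \<Sum>(after_pick S p)"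
    using Cons.IH[OF fin] Cons.prems(2) by simp
  have dec: "S = insert p (proper_divs_in S p \<union> after_pick S p)"
    using pS unfolding after_pick_def proper_divs_in_def by auto
  have d1: "p \<notin> proper_divs_in S p \<union> after_pick S p"
    unfolding after_pick_def proper_divs_in_def by auto
  have d2: "proper_divs_in S p \<inter> after_pick S p = {}"
    unfolding after_pick_def proper_divs_in_def by auto
  have f2: "finite (proper_divs_in S p)" using Cons.prems(1) unfolding proper_divs_in_def by simp
  have "\<Sum>S = p + (\<Sum>(proper_divs_in S p) + \<Sum>(after_pick S p))"
    apply (subst dec)
    using d1 d2 f2 fin by (simp add: sum.union_disjoint)
  then show ?case using IH by simp
qed

lemma legal_seq_append: "legal_seq S (ps @ qs) = (legal_seq S ps \<and> legal_seq (final_state S ps) qs)"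
  by (induction ps arbitrary: S) auto

lemma final_state_append: "final_state S (ps @ qs) = final_state (final_state S ps) qs"
  by (induction ps arbitrary: S) auto

lemma complete_exists:
  assumes "finite S"
  shows "\<exists>qs. legal_seq S qs \<and> (\<forall>q. \<not> legal_pick (final_state S qs) q)"
  using assms
proof (induction "card S" arbitrary: S rule: less_induct)
  case less
  show ?case
  proof (cases "\<exists>q. legal_pick S q")
    case False
    then have "legal_seq S [] \<and> (\<forall>q. \<not> legal_pick (final_state S []) q)" by simp
    then show ?thesis by blast
  next
    case True
    then obtain q where q: "legal_pick S q" by blast
    then have qS: "q \<in> S" unfolding legal_pick_def by simp
    have sub: "after_pick S q \<subset> S" using qS unfolding after_pick_def by auto
    have fin: "finite (after_pick S q)" using less.prems unfolding after_pick_def by simp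
    have "card (after_pick S q) < card S" using psubset_card_mono[OF less.prems sub] .
    from less.hyps[OF this fin] obtain qs where
      "legal_seq (after_pick S q) qs" "\<forall>r. \<not> legal_pick (final_state (after_pick S q) qs) r" by blast
    then have "legal_seq S (q # qs) \<and> (\<forall>r. \<not> legal_pick (final_state S (q # qs)) r)"
      using q by simp
    then show ?thesis by blast
  qed
qed

fun wok :: "nat set \<Rightarrow> (nat \<times> nat) list \<Rightarrow> bool" where
  "wok S [] = True"
| "wok S ((p, w) # rest) = (p \<in> S \<and> w \<in> S \<and> w dvd p \<and> w \<noteq> p \<and>
      (\<forall>qv \<in> set rest. \<not> snd qv dvd p) \<and> wok S rest)"

lemma wok_restrict:
  assumes "wok S rest" "\<forall>qv \<in> set rest. \<not> snd qv dvd p"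
  shows "wok {d \<in> S. \<not> d dvd p} rest"
  using assms
proof (induction rest)
  case Nil then show ?case by simp
next
  case (Cons a rest)
  obtain q v where a: "a = (q, v)" by (cases a)
  have "\<not> q dvd p"
  proof
    assume "q dvd p"
    moreover have "v dvd q" using Cons.prems a by simp
    ultimately have "v dvd p" using dvd_trans by blast
    then show False using Cons.prems a by simp
  qed
  then show ?case using Cons a by auto
qed

lemma wok_legal: "wok S pws \<Longrightarrow> legal_seq S (map fst pws)"
proof (induction pws arbitrary: S)
  case Nil then show ?case by simp
next
  case (Cons a rest)
  obtain p w where a: "a = (p, w)" by (cases a)
  have lp: "legal_pick S p"
    using Cons.prems a unfolding legal_pick_def proper_divs_in_def by auto
  have "wok (after_pick S p) rest"
    unfolding after_pick_eq using wok_restrict Cons.prems a by simp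
  then show ?case using Cons.IH lp a by simp
qed

lemma witness_legal:
  assumes "sorted_wrt R ps"
    and "\<forall>y\<in>set ps. y \<in> S \<and> W y \<in> S \<and> W y dvd y \<and> W y \<noteq> y"
    and "\<forall>x\<in>set ps. \<forall>y\<in>set ps. R x y \<longrightarrow> \<not> W y dvd x"
  shows "legal_seq S ps"
  using assms
proof (induction ps arbitrary: S)
  case Nil then show ?case by simp
next
  case (Cons p ps)
  have lp: "legal_pick S p"
    using Cons.prems unfolding legal_pick_def proper_divs_in_def by auto
  have "legal_seq {d \<in> S. \<not> d dvd p} ps"
  proof (rule Cons.IH)
    show "sorted_wrt R ps" using Cons.prems by simp
    show "\<forall>x\<in>set ps. \<forall>y\<in>set ps. R x y \<longrightarrow> \<not> W y dvd x" using Cons.prems(3) by simp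
    show "\<forall>y\<in>set ps. y \<in> {d \<in> S. \<not> d dvd p} \<and> W y \<in> {d \<in> S. \<not> d dvd p} \<and> W y dvd y \<and> W y \<noteq> y"
    proof
      fix y assume y: "y \<in> set ps"
      have R: "R p y" using Cons.prems(1) y by simp
      have nd: "\<not> W y dvd p" using Cons.prems(3) R y by simp
      have wy: "W y dvd y" using Cons.prems(2) y by simp
      have "\<not> y dvd p" using nd wy dvd_trans by blast
      then show "y \<in> {d \<in> S. \<not> d dvd p} \<and> W y \<in> {d \<in> S. \<not> d dvd p} \<and> W y dvd y \<and> W y \<noteq> y"
        using Cons.prems(2) y nd by auto
    qed
  qed
  then show ?case using lp by (simp add: after_pick_eq)
qed

lemma final_state_sub: "final_state S ps \<subseteq> S"
  by (induction ps arbitrary: S) (auto simp: after_pick_def intro: subset_trans)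

lemma sum_1N: "4 * \<Sum>{1..N::nat} = 2 * (N * (N + 1))"
  by (induction N) (auto simp: algebra_simps)

lemma final_from_win:
  assumes "legal_seq {1..N} ps" "4 * sum_list ps > N * (N + 1)"
  shows "\<exists>ps. complete_game N ps \<and>
           player_score ps > taxman_total {1..N} ps \<and>
           4 * player_score ps > N * (N + 1)"
proof -
  have fin: "finite (final_state {1..N} ps)"
    using final_state_sub[of "{1..N}" ps] finite_subset by blast
  obtain qs where qs: "legal_seq (final_state {1..N} ps) qs"
     "\<forall>q. \<not> legal_pick (final_state (final_state {1..N} ps) qs) q"
    using complete_exists[OF fin] by blast
  let ?g = "ps @ qs"
  have lg: "legal_seq {1..N} ?g" using assms(1) qs(1) by (simp add: legal_seq_append)
  have cg: "complete_game N ?g"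
    unfolding complete_game_def using lg qs(2) by (simp add: final_state_append)
  have sc: "4 * player_score ?g > N * (N + 1)"
    using assms(2) unfolding player_score_def by simp
  have tc: "taxman_total {1..N} ?g + player_score ?g = \<Sum>{1..N}"
    using taxman_cons[OF _ lg] unfolding player_score_def by simp
  have "player_score ?g > taxman_total {1..N} ?g"
    using tc sc sum_1N[of N] by linarith
  then show ?thesis using cg sc by blast
qed




definition cellset :: "nat \<Rightarrow> nat \<Rightarrow> nat \<Rightarrow> nat \<Rightarrow> nat set" where
  "cellset m r lo hi = {p. lo < p \<and> p \<le> hi \<and> p mod m = r}"

definition Gtri :: "nat \<Rightarrow> nat" where "Gtri c = c * (c - 1) div 2"

definition Tcell :: "nat \<Rightarrow> nat \<Rightarrow> nat \<Rightarrow> nat" where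
  "Tcell m r x = m * Gtri ((x + m - r) div m) + r * ((x + m - r) div m)"

lemma Gtri2: "2 * Gtri c = c * (c - 1)"
proof -
  have "even (c * (c - 1))" by (cases c) auto
  then show ?thesis unfolding Gtri_def by simp
qed

lemma sum_lessThan2: "2 * (\<Sum>j<c. j) = c * (c - (1::nat))"
proof (induction c)
  case 0 then show ?case by simp
next
  case (Suc c) then show ?case by (cases c) (auto simp: algebra_simps)
qed

lemma Tcell_sum:
  assumes "r < m"
  shows "Tcell m r x = (\<Sum>p\<in>{p. p \<le> x \<and> p mod m = r}. p)"
proof -
  define c where "c = (x + m - r) div m"
  have m0: "0 < m" using assms by simp
  have set: "{p. p \<le> x \<and> p mod m = r} = (\<lambda>j. m * j + r) ` {..<c}"
  proof (rule set_eqI, rule iffI)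
    fix p assume p: "p \<in> {p. p \<le> x \<and> p mod m = r}"
    then have pe: "p = m * (p div m) + r" using div_mult_mod_eq[of p m] by (simp add: mult.commute)
    have "Suc (p div m) * m \<le> x + m - r" using p pe by (simp add: algebra_simps) linarith
    then have "Suc (p div m) \<le> c" unfolding c_def using m0 by (simp add: less_eq_div_iff_mult_less_eq)
    then show "p \<in> (\<lambda>j. m * j + r) ` {..<c}" using pe by force
  next
    fix p assume "p \<in> (\<lambda>j. m * j + r) ` {..<c}"
    then obtain j where j: "j < c" "p = m * j + r" by auto
    have "Suc j * m \<le> x + m - r" using j(1) unfolding c_def using m0
      by (simp add: less_eq_div_iff_mult_less_eq Suc_le_eq[symmetric])
    then have "p \<le> x" using j(2) assms by (simp add: algebra_simps)
    moreover have "p mod m = r" using j(2) assms by simp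
    ultimately show "p \<in> {p. p \<le> x \<and> p mod m = r}" by simp
  qed
  have inj: "inj_on (\<lambda>j. m * j + r) {..<c}" using m0 by (auto simp: inj_on_def)
  have "(\<Sum>p\<in>{p. p \<le> x \<and> p mod m = r}. p) = (\<Sum>j<c. m * j + r)"
    by (simp add: set sum.reindex[OF inj])
  also have "\<dots> = m * (\<Sum>j<c. j) + r * c" by (simp add: sum.distrib sum_distrib_left)
  also have "\<dots> = Tcell m r x"
  proof -
    have "2 * (m * (\<Sum>j<c. j)) = 2 * (m * Gtri c)" using sum_lessThan2[of c] Gtri2[of c] by simp
    then have "m * (\<Sum>j<c. j) = m * Gtri c" by simp
    then show ?thesis unfolding Tcell_def c_def[symmetric] by simp
  qed
  finally show ?thesis by simp
qed

lemma cell_sum: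
  assumes "r < m" "lo \<le> hi"
  shows "(\<Sum>p\<in>cellset m r lo hi. p) = Tcell m r hi - Tcell m r lo"
    and "Tcell m r lo \<le> Tcell m r hi"
proof -
  have fin: "finite {p. p \<le> hi \<and> p mod m = r}" by simp
  have sub: "{p. p \<le> lo \<and> p mod m = r} \<subseteq> {p. p \<le> hi \<and> p mod m = r}" using assms by auto
  have eq: "cellset m r lo hi = {p. p \<le> hi \<and> p mod m = r} - {p. p \<le> lo \<and> p mod m = r}"
    unfolding cellset_def by auto
  show "(\<Sum>p\<in>cellset m r lo hi. p) = Tcell m r hi - Tcell m r lo"
    unfolding eq Tcell_sum[OF assms(1)] using sum_diff_nat[OF _ sub] fin
    by (simp add: finite_subset[OF sub])
  show "Tcell m r lo \<le> Tcell m r hi"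
    unfolding Tcell_sum[OF assms(1)] using sum_mono2[OF fin sub, of "\<lambda>p. p"] by simp
qed




definition isL :: "nat \<Rightarrow> nat \<Rightarrow> bool" where "isL N p = ((N < 8*p \<and> 6*p \<le> N \<and> 2 dvd p) \<or> (N < 6*p \<and> 4*p \<le> N \<and> 4 dvd p))"
definition isO5 :: "nat \<Rightarrow> nat \<Rightarrow> bool" where "isO5 N p = (N < 2*p \<and> p \<le> N \<and> \<not> 2 dvd p \<and> 5 dvd p \<and> \<not> 3 dvd p)"
definition isO3 :: "nat \<Rightarrow> nat \<Rightarrow> bool" where "isO3 N p = (\<not> 2 dvd p \<and> 3 dvd p \<and> ((3*N < 5*p \<and> p \<le> N) \<or> (N < 2*p \<and> 5*p \<le> 3*N \<and> 9 dvd p)))"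
definition isE :: "nat \<Rightarrow> nat \<Rightarrow> bool" where "isE N p = (2 dvd p \<and> ((2*N < 3*p \<and> p \<le> N) \<or>
   (N < 2*p \<and> 3*p \<le> 2*N \<and> (4 dvd p \<or> (3 dvd p \<and> \<not> 4 dvd p)))))"
definition pick :: "nat \<Rightarrow> nat \<Rightarrow> bool" where "pick N p = (isL N p \<or> isO5 N p \<or> isO3 N p \<or> isE N p)"
definition Wf :: "nat \<Rightarrow> nat \<Rightarrow> nat" where
  "Wf N y = (if 2*y \<le> N then y div 2 else if \<not> 2 dvd y then (if 3 dvd y then y div 3 else y div 5)
     else if \<not> 4 dvd y \<and> 3*y \<le> 2*N then y div 3 else y div 2)"
definition ph :: "nat \<Rightarrow> nat \<Rightarrow> nat" where
  "ph N p = (if 2*p \<le> N then 0 else if \<not> 2 dvd p \<and> \<not> 3 dvd p then 1 else if \<not> 2 dvd p then 2 else 3)"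
definition Rel :: "nat \<Rightarrow> nat \<Rightarrow> nat \<Rightarrow> bool" where "Rel N x y = (ph N x < ph N y \<or> (ph N x = ph N y \<and> x < y))"

lemma pick_cases:
  assumes "pick N p"
  obtains (L) "isL N p" "2*p \<le> N" "ph N p = 0"
    | (O5) "isO5 N p" "N < 2*p" "ph N p = 1"
    | (O3) "isO3 N p" "N < 2*p" "ph N p = 2"
    | (E) "isE N p" "N < 2*p" "ph N p = 3"
proof -
  consider "isL N p" | "isO5 N p" | "isO3 N p" | "isE N p" using assms unfolding pick_def by blast
  then show ?thesis
  proof cases
    case 1 then have "2*p \<le> N" unfolding isL_def by auto
    then show ?thesis using 1 that(1) unfolding ph_def by simp
  next
    case 2 then have "N < 2*p" "\<not> 2 dvd p" "\<not> 3 dvd p" unfolding isO5_def by auto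
    then show ?thesis using 2 that(2) unfolding ph_def by simp
  next
    case 3 then have "N < 2*p" "\<not> 2 dvd p" "3 dvd p" unfolding isO3_def by auto
    then show ?thesis using 3 that(3) unfolding ph_def by simp
  next
    case 4 then have "N < 2*p" "2 dvd p" unfolding isE_def by auto
    then show ?thesis using 4 that(4) unfolding ph_def by simp
  qed
qed

lemma pick_range: "pick N p \<Longrightarrow> 0 < p \<and> p \<le> N"
  unfolding pick_def isL_def isO5_def isO3_def isE_def by auto

lemma ph0: "pick N x \<Longrightarrow> ph N x = 0 \<Longrightarrow> isL N x \<and> 2*x \<le> N"
  by (cases rule: pick_cases) auto
lemma ph1: "pick N x \<Longrightarrow> ph N x = 1 \<Longrightarrow> isO5 N x"
  by (cases rule: pick_cases) auto
lemma ph2: "pick N x \<Longrightarrow> ph N x = 2 \<Longrightarrow> isO3 N x"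
  by (cases rule: pick_cases) auto
lemma ph3: "pick N x \<Longrightarrow> ph N x = 3 \<Longrightarrow> isE N x"
  by (cases rule: pick_cases) auto

lemma tbound: "x = k * t \<Longrightarrow> x < k * n \<Longrightarrow> t < (n::nat)"
  by (metis mult_le_mono2 not_less)

lemma conflict:
  assumes px: "pick N x" and py: "pick N y" and R: "Rel N x y" and d: "Wf N y dvd x"
  shows False
proof -
  define k where "k = Wf N y"
  obtain t where xk: "x = k * t" using d unfolding k_def by blast
  have x0: "0 < x" "x \<le> N" using pick_range[OF px] by auto
  have t0: "0 < t" using xk x0 by (cases t) auto
  from py show False
  proof (cases rule: pick_cases)
    case L
    have k: "y = 2*k" "N < 16*k" "8*k \<le> N" using L unfolding k_def Wf_def isL_def by auto
    have xL: "ph N x = 0" "x < y" using R L unfolding Rel_def by (auto simp: less_Suc_eq eval_nat_numeral)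
    have "N < 8*x" using ph0[OF px xL(1)] by (auto simp: isL_def)
    have "t < 2" by (rule tbound[OF xk]) (use k xL in simp)
    then have "x = k" using t0 xk by simp
    then show False using \<open>N < 8*x\<close> k by simp
  next
    case O5
    have yy: "N < 2*y" "y \<le> N" "\<not> 2 dvd y" "5 dvd y" "\<not> 3 dvd y" using O5 unfolding isO5_def by auto
    have y5: "y = 5*k" using yy unfolding k_def Wf_def by auto
    have k: "y = 5*k" "N < 10*k" "5*k \<le> N" "\<not> 2 dvd k" "\<not> 3 dvd k"
      using yy y5 by auto
    consider "ph N x = 0" | "ph N x = 1" "x < y" using R O5 unfolding Rel_def by (auto simp: less_Suc_eq eval_nat_numeral)
    then show False
    proof cases
      case 1
      then have xx: "isL N x" using ph0[OF px] by auto
      have "t < 3" by (rule tbound[OF xk]) (use k xx in \<open>auto simp: isL_def\<close>)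
      then have "t = 1 \<or> t = 2" using t0 by auto
      then show False using xx xk k unfolding isL_def by auto
    next
      case 2
      then have xx: "isO5 N x" using ph1[OF px] by auto
      have "t < 5" by (rule tbound[OF xk]) (use k 2 in simp)
      then have "t = 1 \<or> t = 2 \<or> t = 3 \<or> t = 4" using t0 by auto
      then show False using xx xk k unfolding isO5_def by auto
    qed
  next
    case O3
    have yy: "N < 2*y" "y \<le> N" "\<not> 2 dvd y" "3 dvd y" "3*N < 5*y \<or> 9 dvd y" using O3 unfolding isO3_def by auto
    have y3: "y = 3*k" using yy unfolding k_def Wf_def by auto
    have "9 dvd y \<Longrightarrow> 3 dvd k" using y3 by auto
    then have k: "y = 3*k" "N < 6*k" "3*k \<le> N" "\<not> 2 dvd k" "N < 5*k \<or> 3 dvd k"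
      using yy y3 by auto
    consider "ph N x = 0" | "ph N x = 1" | "ph N x = 2" "x < y" using R O3 unfolding Rel_def by (auto simp: less_Suc_eq eval_nat_numeral)
    then show False
    proof cases
      case 1
      then have xx: "isL N x" using ph0[OF px] by auto
      have "t < 2" by (rule tbound[OF xk]) (use k xx in \<open>auto simp: isL_def\<close>)
      then have "t = 1" using t0 by simp
        then show False using xx xk k unfolding isL_def by auto
    next
      case 2
      then have xx: "isO5 N x" using ph1[OF px] by auto
      have "t < 6" by (rule tbound[OF xk]) (use k xx in \<open>auto simp: isO5_def\<close>)
      then have "t = 1 \<or> t = 2 \<or> t = 3 \<or> t = 4 \<or> t = 5" using t0 by auto
      then show False using xx xk k unfolding isO5_def by auto
    next
      case 3
      then have xx: "isO3 N x" using ph2[OF px] by auto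
      have "t < 3" by (rule tbound[OF xk]) (use k 3 in simp)
      then have "t = 1 \<or> t = 2" using t0 by auto
      then show False using xx xk k unfolding isO3_def by auto
    qed
  next
    case E
    show False
    proof (cases "\<not> 4 dvd y \<and> 3*y \<le> 2*N")
      case True
      have yy: "N < 2*y" "2 dvd y" "3 dvd y" "\<not> 4 dvd y" "3*y \<le> 2*N"
        using E True unfolding isE_def by auto
      have y3: "y = 3*k" using yy unfolding k_def Wf_def by auto
      have "2 dvd k" using yy y3 by (metis dvd_mult_cancel1 even_mult_iff odd_numeral)
      moreover have "\<not> 4 dvd k" using yy y3 by auto
      ultimately have k: "y = 3*k" "N < 6*k" "9*k \<le> 2*N" "\<not> 4 dvd k" "2 dvd k"
        using yy y3 by auto
      consider "ph N x = 0" | "ph N x = 1" | "ph N x = 2" | "ph N x = 3" "x < y"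
        using R E unfolding Rel_def by (auto simp: less_Suc_eq eval_nat_numeral)
      then show False
      proof cases
        case 1
        then have xx: "isL N x" using ph0[OF px] by auto
        have "t < 2" by (rule tbound[OF xk]) (use k xx in \<open>auto simp: isL_def\<close>)
        then have "t = 1" using t0 by simp
        then show False using xx xk k unfolding isL_def by auto
      next
        case 2
        then have xx: "isO5 N x" using ph1[OF px] by auto
        then show False using xk k unfolding isO5_def by auto
      next
        case 3
        then have xx: "isO3 N x" using ph2[OF px] by auto
        then show False using xk k unfolding isO3_def by auto
      next
        case 4
        then have xx: "isE N x" using ph3[OF px] by auto
        have "t < 3" by (rule tbound[OF xk]) (use k 4 in simp)
        then have "t = 1 \<or> t = 2" using t0 by auto
        then show False using xx xk k unfolding isE_def by auto
      qed
    next
      case False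
      have yy: "N < 2*y" "2 dvd y" "y \<le> N" using E unfolding isE_def by auto
      have y2: "y = 2*k" using yy False unfolding k_def Wf_def by auto
      have "2 dvd k \<or> N < 3*k"
      proof (rule ccontr)
        assume "\<not> (2 dvd k \<or> N < 3*k)"
        then have "\<not> 4 dvd y" "3*y \<le> 2*N" using y2 by auto
        then show False using False by auto
      qed
      then have k: "y = 2*k" "N < 4*k" "2*k \<le> N" "2 dvd k \<or> N < 3*k"
        using yy y2 by auto
      consider "ph N x = 0" | "ph N x = 1" | "ph N x = 2" | "ph N x = 3" "x < y"
        using R E unfolding Rel_def by (auto simp: less_Suc_eq eval_nat_numeral)
      then show False
      proof cases
        case 1
        then have xx: "isL N x" using ph0[OF px] by auto
        have "t < 1" by (rule tbound[OF xk]) (use k xx in \<open>auto simp: isL_def\<close>)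
        then show False using t0 by simp
      next
        case 2
        then have xx: "isO5 N x" using ph1[OF px] by auto
        have "t < 4" by (rule tbound[OF xk]) (use k xx in \<open>auto simp: isO5_def\<close>)
        then have "t = 1 \<or> t = 2 \<or> t = 3" using t0 by auto
        then show False using xx xk k unfolding isO5_def by auto
      next
        case 3
        then have xx: "isO3 N x" using ph2[OF px] by auto
        have "t < 4" by (rule tbound[OF xk]) (use k xx in \<open>auto simp: isO3_def\<close>)
        then have "t = 1 \<or> t = 2 \<or> t = 3" using t0 by auto
        then show False using xx xk k unfolding isO3_def by auto
      next
        case 4
        then have xx: "isE N x" using ph3[OF px] by auto
        have "t < 2" by (rule tbound[OF xk]) (use k 4 in simp)
        then have "t = 1" using t0 by simp
        then show False using xx xk k unfolding isE_def by auto
      qed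
    qed
  qed
qed




definition plist :: "nat \<Rightarrow> (nat \<Rightarrow> nat \<Rightarrow> bool) \<Rightarrow> nat list" where
  "plist N P = filter (P N) [1..<N+1]"

definition strat :: "nat \<Rightarrow> nat list" where
  "strat N = plist N isL @ plist N isO5 @ plist N isO3 @ plist N isE"

lemma wit: assumes "pick N y" shows "Wf N y dvd y \<and> 0 < Wf N y \<and> Wf N y < y"
  using assms
proof (cases rule: pick_cases)
  case L
  have "2 dvd y \<and> 0 < y" using L unfolding isL_def by (auto intro: dvd_trans[of 2 4])
  then show ?thesis using L unfolding Wf_def by auto
next
  case O5
  have "5 dvd y \<and> \<not> 2 dvd y \<and> \<not> 3 dvd y \<and> 0 < y" using O5 unfolding isO5_def by auto
  then show ?thesis using O5 unfolding Wf_def by auto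
next
  case O3
  have "3 dvd y \<and> \<not> 2 dvd y \<and> 0 < y" using O3 unfolding isO3_def by auto
  then show ?thesis using O3 unfolding Wf_def by auto
next
  case E
  have e: "2 dvd y \<and> 0 < y \<and> ((\<not> 4 dvd y \<and> 3*y \<le> 2*N) \<longrightarrow> 3 dvd y)" using E unfolding isE_def by auto
  show ?thesis
  proof (cases "\<not> 4 dvd y \<and> 3*y \<le> 2*N")
    case True then show ?thesis using E e unfolding Wf_def by auto
  next
    case False then show ?thesis using E e unfolding Wf_def by auto
  qed
qed

lemma set_ps: "x \<in> set (strat N) \<Longrightarrow> pick N x"
  unfolding strat_def plist_def pick_def by auto

lemma phs: "isL N p \<Longrightarrow> ph N p = 0" "isO5 N p \<Longrightarrow> ph N p = 1" "isO3 N p \<Longrightarrow> ph N p = 2"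
     "isE N p \<Longrightarrow> ph N p = 3"
proof -
  show "isL N p \<Longrightarrow> ph N p = 0" unfolding isL_def ph_def by auto
  show "isO5 N p \<Longrightarrow> ph N p = 1" unfolding isO5_def ph_def by auto
  show "isO3 N p \<Longrightarrow> ph N p = 2" unfolding isO3_def ph_def by auto
  show "isE N p \<Longrightarrow> ph N p = 3" unfolding isE_def ph_def by auto
qed

lemma set_plist: "set (plist N P) = {p. 1 \<le> p \<and> p \<le> N \<and> P N p}"
  unfolding plist_def by auto

lemma sorted_plist:
  assumes "\<And>p q. P N p \<Longrightarrow> P N q \<Longrightarrow> ph N p = ph N q"
  shows "sorted_wrt (Rel N) (plist N P)"
proof -
  have "sorted_wrt (<) (filter (P N) [1..<N+1])" by (rule sorted_wrt_filter) (rule sorted_wrt_upt)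
  then show ?thesis unfolding plist_def
  proof (rule sorted_wrt_mono_rel[rotated])
    fix x y assume "x \<in> set (filter (P N) [1..<N+1])" "y \<in> set (filter (P N) [1..<N+1])" "x < y"
    then have "P N x" "P N y" by (simp_all del: upt_Suc)
    then have "ph N x = ph N y" by (rule assms)
    then show "Rel N x y" unfolding Rel_def using \<open>x < y\<close> by simp
  qed
qed

lemma ps_sorted: "sorted_wrt (Rel N) (strat N)"
proof -
  have a: "sorted_wrt (Rel N) (plist N isL)" by (rule sorted_plist) (simp add: phs)
  have b: "sorted_wrt (Rel N) (plist N isO5)" by (rule sorted_plist) (simp add: phs)
  have c: "sorted_wrt (Rel N) (plist N isO3)" by (rule sorted_plist) (simp add: phs)
  have d: "sorted_wrt (Rel N) (plist N isE)" by (rule sorted_plist) (simp add: phs)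
  have cd: "sorted_wrt (Rel N) (plist N isO3 @ plist N isE)"
    unfolding sorted_wrt_append using c d by (auto simp: set_plist Rel_def phs)
  have bcd: "sorted_wrt (Rel N) (plist N isO5 @ plist N isO3 @ plist N isE)"
    unfolding sorted_wrt_append[of _ "plist N isO5"] using b cd by (auto simp: set_plist Rel_def phs)
  show ?thesis
    unfolding strat_def sorted_wrt_append[of _ "plist N isL"] using a bcd by (auto simp: set_plist Rel_def phs)
qed

lemma ps_legal: "legal_seq {1..N} (strat N)"
proof (rule witness_legal[where R = "Rel N" and W = "Wf N"])
  show "sorted_wrt (Rel N) (strat N)" by (rule ps_sorted)
  show "\<forall>y\<in>set (strat N). y \<in> {1..N} \<and> Wf N y \<in> {1..N} \<and> Wf N y dvd y \<and> Wf N y \<noteq> y"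
  proof
    fix y assume "y \<in> set (strat N)"
    then have p: "pick N y" by (rule set_ps)
    show "y \<in> {1..N} \<and> Wf N y \<in> {1..N} \<and> Wf N y dvd y \<and> Wf N y \<noteq> y"
      using wit[OF p] pick_range[OF p] by auto
  qed
  show "\<forall>x\<in>set (strat N). \<forall>y\<in>set (strat N). Rel N x y \<longrightarrow> \<not> Wf N y dvd x"
    using conflict set_ps by blast
qed




definition cf :: "nat \<Rightarrow> nat" where
  "cf N = (Tcell 2 0 (N div 6) - Tcell 2 0 (N div 8)) + (Tcell 4 0 (N div 4) - Tcell 4 0 (N div 6))
    + (Tcell 30 5 N - Tcell 30 5 (N div 2)) + (Tcell 30 25 N - Tcell 30 25 (N div 2))
    + (Tcell 6 3 N - Tcell 6 3 (3*N div 5)) + (Tcell 18 9 (3*N div 5) - Tcell 18 9 (N div 2))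
    + (Tcell 2 0 N - Tcell 2 0 (2*N div 3)) + (Tcell 4 0 (2*N div 3) - Tcell 4 0 (N div 2))
    + (Tcell 12 6 (2*N div 3) - Tcell 12 6 (N div 2))"

lemma sum_plist: "sum_list (plist N P) = (\<Sum>p\<in>{p. 1 \<le> p \<and> p \<le> N \<and> P N p}. p)"
proof -
  have "sum_list (plist N P) = sum (\<lambda>p. p) (set (plist N P))"
    unfolding plist_def using sum_list_distinct_conv_sum_set[of "filter (P N) [1..<N+1]" "\<lambda>p. p"]
    by (simp del: upt_Suc)
  then show ?thesis by (simp add: set_plist)
qed

lemma fin_cell: "finite (cellset m r lo hi)"
  unfolding cellset_def by (rule finite_subset[of _ "{..hi}"]) auto

lemma m30: "(p mod 30 = 5 \<or> p mod 30 = (25::nat)) \<longleftrightarrow> (\<not> 2 dvd p \<and> 5 dvd p \<and> \<not> 3 dvd p)" by presburger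
lemma m6: "p mod 6 = (3::nat) \<longleftrightarrow> (\<not> 2 dvd p \<and> 3 dvd p)" by presburger
lemma m18: "p mod 18 = (9::nat) \<longleftrightarrow> (\<not> 2 dvd p \<and> 9 dvd p)" by presburger
lemma m12: "p mod 12 = (6::nat) \<longleftrightarrow> (2 dvd p \<and> 3 dvd p \<and> \<not> 4 dvd p)" by presburger
lemma m9: "9 dvd (p::nat) \<Longrightarrow> 3 dvd p" by presburger

lemmas dv = div_less_iff_less_mult[OF zero_less_numeral] less_eq_div_iff_mult_less_eq[OF zero_less_numeral]

lemma setL: "{p. 1 \<le> p \<and> p \<le> N \<and> isL N p} = cellset 2 0 (N div 8) (N div 6) \<union> cellset 4 0 (N div 6) (N div 4)"
  unfolding cellset_def isL_def by (auto simp: dv dvd_eq_mod_eq_0)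

lemma setO5: "{p. 1 \<le> p \<and> p \<le> N \<and> isO5 N p} = cellset 30 5 (N div 2) N \<union> cellset 30 25 (N div 2) N"
proof -
  have "{p. 1 \<le> p \<and> p \<le> N \<and> isO5 N p} = {p. N div 2 < p \<and> p \<le> N \<and> (p mod 30 = 5 \<or> p mod 30 = 25)}"
    unfolding isO5_def m30 by (auto simp: dv)
  then show ?thesis unfolding cellset_def by auto
qed

lemma setO3: "{p. 1 \<le> p \<and> p \<le> N \<and> isO3 N p} = cellset 6 3 (3*N div 5) N \<union> cellset 18 9 (N div 2) (3*N div 5)"
proof (rule set_eqI)
  fix p :: nat
  show "p \<in> {p. 1 \<le> p \<and> p \<le> N \<and> isO3 N p} \<longleftrightarrow> p \<in> cellset 6 3 (3*N div 5) N \<union> cellset 18 9 (N div 2) (3*N div 5)"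
    unfolding cellset_def isO3_def mem_Collect_eq Un_iff m6 m18 dv using m9[of p] by linarith
qed

lemma setE: "{p. 1 \<le> p \<and> p \<le> N \<and> isE N p} = cellset 2 0 (2*N div 3) N \<union> cellset 4 0 (N div 2) (2*N div 3) \<union> cellset 12 6 (N div 2) (2*N div 3)"
proof (rule set_eqI)
  fix p :: nat
  have "p mod 2 = 0 \<longleftrightarrow> 2 dvd p" "p mod 4 = 0 \<longleftrightarrow> 4 dvd p" "4 dvd p \<Longrightarrow> 2 dvd p" by (auto intro: dvd_trans[of 2 4])
  then show "p \<in> {p. 1 \<le> p \<and> p \<le> N \<and> isE N p} \<longleftrightarrow> p \<in> cellset 2 0 (2*N div 3) N \<union> cellset 4 0 (N div 2) (2*N div 3) \<union> cellset 12 6 (N div 2) (2*N div 3)"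
    unfolding cellset_def isE_def mem_Collect_eq Un_iff m12 dv by linarith
qed

lemma sum_un: "A \<inter> B = {} \<Longrightarrow> finite A \<Longrightarrow> finite B \<Longrightarrow> (\<Sum>p\<in>A \<union> B. (p::nat)) = (\<Sum>p\<in>A. p) + (\<Sum>p\<in>B. p)"
  by (simp add: sum.union_disjoint)

lemma ord1: "N div 8 \<le> N div (6::nat)" "N div 6 \<le> N div (4::nat)" "N div 2 \<le> (N::nat)"
  "3*N div 5 \<le> (N::nat)" "N div 2 \<le> 3*N div (5::nat)" "2*N div 3 \<le> (N::nat)" "N div 2 \<le> 2*N div (3::nat)"
  by (auto simp: dv div_le_mono2) 

lemma cs: "r < m \<Longrightarrow> lo \<le> hi \<Longrightarrow> (\<Sum>p\<in>cellset m r lo hi. p) = Tcell m r hi - Tcell m r lo"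
  by (rule cell_sum(1))

lemma dis_int: "b \<le> c \<Longrightarrow> cellset m r a b \<inter> cellset m' r' c d = {}"
  unfolding cellset_def by auto

lemma dis_res: "p mod m = r \<Longrightarrow> p mod m' = r' \<Longrightarrow> False \<Longrightarrow> True" by simp

lemma score_cf: "sum_list (strat N) = cf N"
proof -
  have o: "N div 8 \<le> N div (6::nat)" "N div 6 \<le> N div (4::nat)" "N div 2 \<le> (N::nat)"
    "3*N div 5 \<le> (N::nat)" "N div 2 \<le> 3*N div (5::nat)" "2*N div 3 \<le> (N::nat)" "N div 2 \<le> 2*N div (3::nat)"
    by (rule ord1)+
  have "sum_list (plist N isL) = (Tcell 2 0 (N div 6) - Tcell 2 0 (N div 8)) + (Tcell 4 0 (N div 4) - Tcell 4 0 (N div 6))"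
    unfolding sum_plist setL
    by (subst sum_un[OF dis_int]) (auto simp: fin_cell cs o)
  moreover have "sum_list (plist N isO5) = (Tcell 30 5 N - Tcell 30 5 (N div 2)) + (Tcell 30 25 N - Tcell 30 25 (N div 2))"
  proof -
    have "cellset 30 5 (N div 2) N \<inter> cellset 30 25 (N div 2) N = {}" unfolding cellset_def by auto
    then show ?thesis unfolding sum_plist setO5
      by (subst sum_un) (auto simp: fin_cell cs o)
  qed
  moreover have "sum_list (plist N isO3) = (Tcell 6 3 N - Tcell 6 3 (3*N div 5)) + (Tcell 18 9 (3*N div 5) - Tcell 18 9 (N div 2))"
  proof -
    have "cellset 6 3 (3*N div 5) N \<inter> cellset 18 9 (N div 2) (3*N div 5) = {}" unfolding cellset_def by auto
    then show ?thesis unfolding sum_plist setO3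
      by (subst sum_un) (auto simp: fin_cell cs o)
  qed
  moreover have "sum_list (plist N isE) = (Tcell 2 0 N - Tcell 2 0 (2*N div 3)) + (Tcell 4 0 (2*N div 3) - Tcell 4 0 (N div 2))
    + (Tcell 12 6 (2*N div 3) - Tcell 12 6 (N div 2))"
  proof -
    have d1: "cellset 4 0 (N div 2) (2*N div 3) \<inter> cellset 12 6 (N div 2) (2*N div 3) = {}"
    proof -
      have "p mod 4 = 0 \<Longrightarrow> p mod 12 \<noteq> (6::nat)" for p by presburger
      then show ?thesis unfolding cellset_def by auto
    qed
    have d2: "cellset 2 0 (2*N div 3) N \<inter> (cellset 4 0 (N div 2) (2*N div 3) \<union> cellset 12 6 (N div 2) (2*N div 3)) = {}"
      unfolding cellset_def by auto
    show ?thesis unfolding sum_plist setE Un_assoc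
      by (subst sum_un[OF d2], simp add: fin_cell, simp add: fin_cell, subst sum_un[OF d1])
         (auto simp: fin_cell cs o)
  qed
  ultimately show ?thesis unfolding strat_def cf_def by simp
qed




definition badN :: "nat set" where "badN = {1,3,11,13,15,17,18,19,20,21,23,24,25,61,73}"

function chk :: "nat \<Rightarrow> nat \<Rightarrow> bool" where
  "chk a b = (if b \<le> a then True else ((a \<in> badN \<or> a * (a + 1) < 4 * cf a) \<and> chk (a+1) b))"
  by auto
termination by (relation "measure (\<lambda>(a,b). b - a)") auto
declare chk.simps[simp del]

lemma chk_sound: "chk a b \<Longrightarrow> a \<le> N \<Longrightarrow> N < b \<Longrightarrow> N \<in> badN \<or> N * (N + 1) < 4 * cf N"
proof (induction a b rule: chk.induct)
  case (1 a b)
  show ?case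
  proof (cases "N = a")
    case True then show ?thesis using "1.prems" by (subst (asm) chk.simps) auto
  next
    case False
    then have "chk (a+1) b" "a + 1 \<le> N" using "1.prems" by (subst (asm) chk.simps, auto split: if_splits)+
    then show ?thesis using "1.IH" "1.prems" by (auto simp: chk.simps[of a b])
  qed
qed





lemma Gtri_real: "2 * real (Gtri c) = real c * real c - real c"
proof -
  have "real (2 * Gtri c) = real (c * (c - 1))" using Gtri2[of c] by simp
  moreover have "real (c * (c - 1)) = real c * real c - real c" by (cases c) (auto simp: algebra_simps)
  ultimately show ?thesis by simp
qed

lemma Tcell_real:
  assumes "r < m"
  shows "2 * real m * real (Tcell m r x) =
    (real m * real ((x+m-r) div m) + real r - real m/2)^2 - (real r - real m/2)^2"
proof -
  define c where "c = (x+m-r) div m"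
  have "2 * real m * real (Tcell m r x) = real m * real m * (2 * real (Gtri c)) + 2 * real m * real r * real c"
    unfolding Tcell_def c_def[symmetric] by (simp add: algebra_simps)
  also have "\<dots> = (real m * real c + real r - real m/2)^2 - (real r - real m/2)^2"
    unfolding Gtri_real by (simp add: power2_eq_square algebra_simps)
  finally show ?thesis unfolding c_def .
qed

lemma div_bounds:
  assumes "0 < m"
  shows "real m * real (y div m) \<le> real y" "real y < real m * real (y div m) + real m"
proof -
  have e: "y = m * (y div m) + y mod m" by simp
  have "y mod m < m" using assms by simp
  then show "real m * real (y div m) \<le> real y" "real y < real m * real (y div m) + real m"
    using e by (metis of_nat_add of_nat_less_iff of_nat_mult le_add1 of_nat_le_iff,
                metis add_less_cancel_left of_nat_add of_nat_less_iff of_nat_mult)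
qed

lemma nat_div_up: "0 < (m::nat) \<Longrightarrow> y < m * (y div m) + m"
proof -
  assume "0 < m"
  then have "y mod m < m" by simp
  moreover have "y = m * (y div m) + y mod m" by simp
  ultimately show ?thesis by linarith
qed

lemma cell_real:
  fixes m r lo hi :: nat and A B :: real
  assumes "r < m" "lo \<le> hi" "0 \<le> A" "A \<le> real hi - real m / 2 + 1" "real lo + real m / 2 \<le> B"
  shows "A^2 - B^2 \<le> 2 * real m * (real (Tcell m r hi) - real (Tcell m r lo))"
proof -
  have m0: "0 < m" using assms by simp
  define sh where "sh = real m * real ((hi+m-r) div m) + real r - real m/2"
  define sl where "sl = real m * real ((lo+m-r) div m) + real r - real m/2"
  have "hi + m - r < m * ((hi+m-r) div m) + m" by (rule nat_div_up[OF m0])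
  then have "hi + 1 \<le> m * ((hi+m-r) div m) + r" using assms(1) by linarith
  then have h1: "real hi + 1 \<le> real m * real ((hi+m-r) div m) + real r"
    by (metis of_nat_add of_nat_le_iff of_nat_mult of_nat_1)
  have "A \<le> sh" unfolding sh_def using h1 assms(4) by linarith
  then have sq1: "A^2 \<le> sh^2" using assms(3) by (simp add: power_mono)
  have l1: "real m * real ((lo+m-r) div m) \<le> real lo + real m - real r"
    using div_bounds(1)[OF m0, of "lo+m-r"] assms(1) by simp
  have l2: "0 \<le> real m * real ((lo+m-r) div m)" by simp
  have "sl \<le> B" "- B \<le> sl" unfolding sl_def using l1 l2 assms(1,5) by linarith+
  then have sq2: "sl^2 \<le> B^2" by (simp add: abs_le_square_iff[symmetric] abs_le_iff)
  have "2 * real m * (real (Tcell m r hi) - real (Tcell m r lo)) = sh^2 - sl^2"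
    unfolding right_diff_distrib Tcell_real[OF assms(1)] sh_def sl_def by simp
  then show ?thesis using sq1 sq2 by linarith
qed

lemma floor_lo: "0 < d \<Longrightarrow> real ((k*N) div d) \<le> real k * real N / real d"
  using div_bounds(1)[of d "k*N"] by (simp add: field_simps)
lemma floor_hi: "0 < d \<Longrightarrow> (real k * real N - real d + 1) / real d \<le> real ((k*N) div d)"
proof -
  assume d: "0 < d"
  have "k*N < d * ((k*N) div d) + d" by (rule nat_div_up[OF d])
  then have "k*N + 1 \<le> d * ((k*N) div d) + d" by linarith
  then have "real k * real N + 1 \<le> real d * real ((k*N) div d) + real d"
    by (metis of_nat_add of_nat_le_iff of_nat_mult of_nat_1)
  then show ?thesis using d by (simp add: field_simps)
qed

lemma cell_poly:
  fixes p q s t a b c x :: real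
  assumes "r < m" "lo \<le> hi" "0 \<le> p*x + q" "p*x + q \<le> real hi - real m / 2 + 1"
    "real lo + real m / 2 \<le> s*x + t" "(p*x + q)^2 - (s*x + t)^2 = a*x^2 + b*x + c"
  shows "a*x^2 + b*x + c \<le> 2*real m*(real (Tcell m r hi) - real (Tcell m r lo))"
  using cell_real[OF assms(1-3) assms(4) assms(5)] assms(6) by simp

lemma big:
  assumes N: "459 \<le> N"
  shows "N * (N + 1) < 4 * cf N"
proof -
  define x where "x = real N"
  have x: "459 \<le> x" using N unfolding x_def by simp
  have c0: "(7/576)*x^2 + (-19/36)*x + (-11/36) \<le> 2*real (2::nat)*(real (Tcell 2 0 (N div 6)) - real (Tcell 2 0 (N div 8)))"
  proof (rule cell_poly[where p="(1/6)" and q="(-5/6)" and s="(1/8)" and t="(1)"])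
    show "0 < (2::nat)" by simp
    show "N div 8 \<le> N div 6" by (rule ord1)
    show "0 \<le> (1/6)*x + (-5/6)" using x by simp
    show "(1/6)*x + (-5/6) \<le> real (N div 6) - real (2::nat)/2 + 1" using floor_hi[of 6 1 N] x_def by (simp add: field_simps)
    show "real (N div 8) + real (2::nat)/2 \<le> (1/8)*x + (1)" using floor_lo[of 8 1 N] x_def by (simp add: field_simps)
    show "((1/6)*x + (-5/6))^2 - ((1/8)*x + (1))^2 = (7/576)*x^2 + (-19/36)*x + (-11/36)"
      by (simp add: power2_eq_square field_simps)
  qed
  have c1: "(5/144)*x^2 + (-37/24)*x + (-15/16) \<le> 2*real (4::nat)*(real (Tcell 4 0 (N div 4)) - real (Tcell 4 0 (N div 6)))"
  proof (rule cell_poly[where p="(1/4)" and q="(-7/4)" and s="(1/6)" and t="(2)"])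
    show "0 < (4::nat)" by simp
    show "N div 6 \<le> N div 4" by (rule ord1)
    show "0 \<le> (1/4)*x + (-7/4)" using x by simp
    show "(1/4)*x + (-7/4) \<le> real (N div 4) - real (4::nat)/2 + 1" using floor_hi[of 4 1 N] x_def by (simp add: field_simps)
    show "real (N div 6) + real (4::nat)/2 \<le> (1/6)*x + (2)" using floor_lo[of 6 1 N] x_def by (simp add: field_simps)
    show "((1/4)*x + (-7/4))^2 - ((1/6)*x + (2))^2 = (5/144)*x^2 + (-37/24)*x + (-15/16)"
      by (simp add: power2_eq_square field_simps)
  qed
  have c2: "(3/4)*x^2 + (-43)*x + (-29) \<le> 2*real (30::nat)*(real (Tcell 30 5 (N)) - real (Tcell 30 5 (N div 2)))"
  proof (rule cell_poly[where p="(1)" and q="(-14)" and s="(1/2)" and t="(15)"])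
    show "5 < (30::nat)" by simp
    show "N div 2 \<le> N" by (rule ord1)
    show "0 \<le> (1)*x + (-14)" using x by simp
    show "(1)*x + (-14) \<le> real (N) - real (30::nat)/2 + 1" using x_def x_def by (simp add: field_simps)
    show "real (N div 2) + real (30::nat)/2 \<le> (1/2)*x + (15)" using floor_lo[of 2 1 N] x_def by (simp add: field_simps)
    show "((1)*x + (-14))^2 - ((1/2)*x + (15))^2 = (3/4)*x^2 + (-43)*x + (-29)"
      by (simp add: power2_eq_square field_simps)
  qed
  have c3: "(3/4)*x^2 + (-43)*x + (-29) \<le> 2*real (30::nat)*(real (Tcell 30 25 (N)) - real (Tcell 30 25 (N div 2)))"
  proof (rule cell_poly[where p="(1)" and q="(-14)" and s="(1/2)" and t="(15)"])
    show "25 < (30::nat)" by simp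
    show "N div 2 \<le> N" by (rule ord1)
    show "0 \<le> (1)*x + (-14)" using x by simp
    show "(1)*x + (-14) \<le> real (N) - real (30::nat)/2 + 1" using x_def x_def by (simp add: field_simps)
    show "real (N div 2) + real (30::nat)/2 \<le> (1/2)*x + (15)" using floor_lo[of 2 1 N] x_def by (simp add: field_simps)
    show "((1)*x + (-14))^2 - ((1/2)*x + (15))^2 = (3/4)*x^2 + (-43)*x + (-29)"
      by (simp add: power2_eq_square field_simps)
  qed
  have c4: "(16/25)*x^2 + (-38/5)*x + (-5) \<le> 2*real (6::nat)*(real (Tcell 6 3 (N)) - real (Tcell 6 3 (3*N div 5)))"
  proof (rule cell_poly[where p="(1)" and q="(-2)" and s="(3/5)" and t="(3)"])
    show "3 < (6::nat)" by simp
    show "3*N div 5 \<le> N" by (rule ord1)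
    show "0 \<le> (1)*x + (-2)" using x by simp
    show "(1)*x + (-2) \<le> real (N) - real (6::nat)/2 + 1" using x_def x_def by (simp add: field_simps)
    show "real (3*N div 5) + real (6::nat)/2 \<le> (3/5)*x + (3)" using floor_lo[of 5 3 N] x_def by (simp add: field_simps)
    show "((1)*x + (-2))^2 - ((3/5)*x + (3))^2 = (16/25)*x^2 + (-38/5)*x + (-5)"
      by (simp add: power2_eq_square field_simps)
  qed
  have c5: "(11/100)*x^2 + (-489/25)*x + (-89/25) \<le> 2*real (18::nat)*(real (Tcell 18 9 (3*N div 5)) - real (Tcell 18 9 (N div 2)))"
  proof (rule cell_poly[where p="(3/5)" and q="(-44/5)" and s="(1/2)" and t="(9)"])
    show "9 < (18::nat)" by simp
    show "N div 2 \<le> 3*N div 5" by (rule ord1)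
    show "0 \<le> (3/5)*x + (-44/5)" using x by simp
    show "(3/5)*x + (-44/5) \<le> real (3*N div 5) - real (18::nat)/2 + 1" using floor_hi[of 5 3 N] x_def by (simp add: field_simps)
    show "real (N div 2) + real (18::nat)/2 \<le> (1/2)*x + (9)" using floor_lo[of 2 1 N] x_def by (simp add: field_simps)
    show "((3/5)*x + (-44/5))^2 - ((1/2)*x + (9))^2 = (11/100)*x^2 + (-489/25)*x + (-89/25)"
      by (simp add: power2_eq_square field_simps)
  qed
  have c6: "(5/9)*x^2 + (-4/3)*x + (-1) \<le> 2*real (2::nat)*(real (Tcell 2 0 (N)) - real (Tcell 2 0 (2*N div 3)))"
  proof (rule cell_poly[where p="(1)" and q="(0)" and s="(2/3)" and t="(1)"])
    show "0 < (2::nat)" by simp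
    show "2*N div 3 \<le> N" by (rule ord1)
    show "0 \<le> (1)*x + (0)" using x by simp
    show "(1)*x + (0) \<le> real (N) - real (2::nat)/2 + 1" using x_def x_def by (simp add: field_simps)
    show "real (2*N div 3) + real (2::nat)/2 \<le> (2/3)*x + (1)" using floor_lo[of 3 2 N] x_def by (simp add: field_simps)
    show "((1)*x + (0))^2 - ((2/3)*x + (1))^2 = (5/9)*x^2 + (-4/3)*x + (-1)"
      by (simp add: power2_eq_square field_simps)
  qed
  have c7: "(7/36)*x^2 + (-38/9)*x + (-11/9) \<le> 2*real (4::nat)*(real (Tcell 4 0 (2*N div 3)) - real (Tcell 4 0 (N div 2)))"
  proof (rule cell_poly[where p="(2/3)" and q="(-5/3)" and s="(1/2)" and t="(2)"])
    show "0 < (4::nat)" by simp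
    show "N div 2 \<le> 2*N div 3" by (rule ord1)
    show "0 \<le> (2/3)*x + (-5/3)" using x by simp
    show "(2/3)*x + (-5/3) \<le> real (2*N div 3) - real (4::nat)/2 + 1" using floor_hi[of 3 2 N] x_def by (simp add: field_simps)
    show "real (N div 2) + real (4::nat)/2 \<le> (1/2)*x + (2)" using floor_lo[of 2 1 N] x_def by (simp add: field_simps)
    show "((2/3)*x + (-5/3))^2 - ((1/2)*x + (2))^2 = (7/36)*x^2 + (-38/9)*x + (-11/9)"
      by (simp add: power2_eq_square field_simps)
  qed
  have c8: "(7/36)*x^2 + (-122/9)*x + (-35/9) \<le> 2*real (12::nat)*(real (Tcell 12 6 (2*N div 3)) - real (Tcell 12 6 (N div 2)))"
  proof (rule cell_poly[where p="(2/3)" and q="(-17/3)" and s="(1/2)" and t="(6)"])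
    show "6 < (12::nat)" by simp
    show "N div 2 \<le> 2*N div 3" by (rule ord1)
    show "0 \<le> (2/3)*x + (-17/3)" using x by simp
    show "(2/3)*x + (-17/3) \<le> real (2*N div 3) - real (12::nat)/2 + 1" using floor_hi[of 3 2 N] x_def by (simp add: field_simps)
    show "real (N div 2) + real (12::nat)/2 \<le> (1/2)*x + (6)" using floor_lo[of 2 1 N] x_def by (simp add: field_simps)
    show "((2/3)*x + (-17/3))^2 - ((1/2)*x + (6))^2 = (7/36)*x^2 + (-122/9)*x + (-35/9)"
      by (simp add: power2_eq_square field_simps)
  qed
  have m0: "Tcell 2 0 (N div 8) \<le> Tcell 2 0 (N div 6)" by (rule cell_sum(2)) (simp_all add: ord1)
  have m1: "Tcell 4 0 (N div 6) \<le> Tcell 4 0 (N div 4)" by (rule cell_sum(2)) (simp_all add: ord1)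
  have m2: "Tcell 30 5 (N div 2) \<le> Tcell 30 5 (N)" by (rule cell_sum(2)) (simp_all add: ord1)
  have m3: "Tcell 30 25 (N div 2) \<le> Tcell 30 25 (N)" by (rule cell_sum(2)) (simp_all add: ord1)
  have m4: "Tcell 6 3 (3*N div 5) \<le> Tcell 6 3 (N)" by (rule cell_sum(2)) (simp_all add: ord1)
  have m5: "Tcell 18 9 (N div 2) \<le> Tcell 18 9 (3*N div 5)" by (rule cell_sum(2)) (simp_all add: ord1)
  have m6: "Tcell 2 0 (2*N div 3) \<le> Tcell 2 0 (N)" by (rule cell_sum(2)) (simp_all add: ord1)
  have m7: "Tcell 4 0 (N div 2) \<le> Tcell 4 0 (2*N div 3)" by (rule cell_sum(2)) (simp_all add: ord1)
  have m8: "Tcell 12 6 (N div 2) \<le> Tcell 12 6 (2*N div 3)" by (rule cell_sum(2)) (simp_all add: ord1)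
  have cfr: "real (cf N) = (real (Tcell 2 0 (N div 6)) - real (Tcell 2 0 (N div 8))) + (real (Tcell 4 0 (N div 4)) - real (Tcell 4 0 (N div 6)))
    + (real (Tcell 30 5 N) - real (Tcell 30 5 (N div 2))) + (real (Tcell 30 25 N) - real (Tcell 30 25 (N div 2)))
    + (real (Tcell 6 3 N) - real (Tcell 6 3 (3*N div 5))) + (real (Tcell 18 9 (3*N div 5)) - real (Tcell 18 9 (N div 2)))
    + (real (Tcell 2 0 N) - real (Tcell 2 0 (2*N div 3))) + (real (Tcell 4 0 (2*N div 3)) - real (Tcell 4 0 (N div 2)))
    + (real (Tcell 12 6 (2*N div 3)) - real (Tcell 12 6 (N div 2)))"
    unfolding cf_def using m0 m1 m2 m3 m4 m5 m6 m7 m8 by (simp add: of_nat_diff)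
  have xx: "459 * x \<le> x^2" using x by (simp add: power2_eq_square)
  have "x^2 + x < 4 * real (cf N)"
    using c0 c1 c2 c3 c4 c5 c6 c7 c8 cfr xx x by simp
  then have "real (N * (N + 1)) < real (4 * cf N)" unfolding x_def by (simp add: power2_eq_square algebra_simps)
  then show ?thesis by (simp only: of_nat_less_iff)
qed




lemma ex11: "\<exists>ps. legal_seq {1..11::nat} ps \<and> 11 * (11 + 1) < 4 * sum_list ps"
proof -
  have "wok {1..11} (zip [11, 9, 6, 10, 8] [1, 3, 2, 5, 4])" by simp
  from wok_legal[OF this] show ?thesis by (intro exI[of _ "[11, 9, 6, 10, 8]"]) simp
qed

lemma ex13: "\<exists>ps. legal_seq {1..13::nat} ps \<and> 13 * (13 + 1) < 4 * sum_list ps"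
proof -
  have "wok {1..13} (zip [13, 9, 10, 8, 12] [1, 3, 5, 4, 6])" by simp
  from wok_legal[OF this] show ?thesis by (intro exI[of _ "[13, 9, 10, 8, 12]"]) simp
qed

lemma ex15: "\<exists>ps. legal_seq {1..15::nat} ps \<and> 15 * (15 + 1) < 4 * sum_list ps"
proof -
  have "wok {1..15} (zip [13, 9, 15, 10, 14, 8, 12] [1, 3, 5, 2, 7, 4, 6])" by simp
  from wok_legal[OF this] show ?thesis by (intro exI[of _ "[13, 9, 15, 10, 14, 8, 12]"]) simp
qed

lemma ex17: "\<exists>ps. legal_seq {1..17::nat} ps \<and> 17 * (17 + 1) < 4 * sum_list ps"
proof -
  have "wok {1..17} (zip [17, 9, 15, 10, 14, 16, 12] [1, 3, 5, 2, 7, 8, 6])" by simp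
  from wok_legal[OF this] show ?thesis by (intro exI[of _ "[17, 9, 15, 10, 14, 16, 12]"]) simp
qed

lemma ex18: "\<exists>ps. legal_seq {1..18::nat} ps \<and> 18 * (18 + 1) < 4 * sum_list ps"
proof -
  have "wok {1..18} (zip [17, 9, 15, 10, 18, 12, 16, 14] [1, 3, 5, 2, 6, 4, 8, 7])" by simp
  from wok_legal[OF this] show ?thesis by (intro exI[of _ "[17, 9, 15, 10, 18, 12, 16, 14]"]) simp
qed

lemma ex19: "\<exists>ps. legal_seq {1..19::nat} ps \<and> 19 * (19 + 1) < 4 * sum_list ps"
proof -
  have "wok {1..19} (zip [19, 15, 10, 14, 16, 12, 18] [1, 5, 2, 7, 8, 6, 9])" by simp
  from wok_legal[OF this] show ?thesis by (intro exI[of _ "[19, 15, 10, 14, 16, 12, 18]"]) simp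
qed

lemma ex20: "\<exists>ps. legal_seq {1..20::nat} ps \<and> 20 * (20 + 1) < 4 * sum_list ps"
proof -
  have "wok {1..20} (zip [19, 15, 10, 20, 16, 14, 12, 18] [1, 5, 2, 4, 8, 7, 6, 9])" by simp
  from wok_legal[OF this] show ?thesis by (intro exI[of _ "[19, 15, 10, 20, 16, 14, 12, 18]"]) simp
qed

lemma ex21: "\<exists>ps. legal_seq {1..21::nat} ps \<and> 21 * (21 + 1) < 4 * sum_list ps"
proof -
  have "wok {1..21} (zip [19, 21, 14, 15, 20, 16, 12, 18] [1, 7, 2, 5, 10, 8, 6, 9])" by simp
  from wok_legal[OF this] show ?thesis by (intro exI[of _ "[19, 21, 14, 15, 20, 16, 12, 18]"]) simp
qed

lemma ex23: "\<exists>ps. legal_seq {1..23::nat} ps \<and> 23 * (23 + 1) < 4 * sum_list ps"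
proof -
  have "wok {1..23} (zip [23, 21, 14, 22, 15, 20, 16, 12, 18] [1, 7, 2, 11, 5, 10, 8, 6, 9])" by simp
  from wok_legal[OF this] show ?thesis by (intro exI[of _ "[23, 21, 14, 22, 15, 20, 16, 12, 18]"]) simp
qed

lemma ex24: "\<exists>ps. legal_seq {1..24::nat} ps \<and> 24 * (24 + 1) < 4 * sum_list ps"
proof -
  have "wok {1..24} (zip [23, 21, 14, 22, 15, 20, 16, 24, 18] [1, 7, 2, 11, 5, 10, 8, 12, 9])" by simp
  from wok_legal[OF this] show ?thesis by (intro exI[of _ "[23, 21, 14, 22, 15, 20, 16, 24, 18]"]) simp
qed

lemma ex25: "\<exists>ps. legal_seq {1..25::nat} ps \<and> 25 * (25 + 1) < 4 * sum_list ps"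
proof -
  have "wok {1..25} (zip [23, 25, 15, 21, 14, 22, 20, 16, 24, 18] [1, 5, 3, 7, 2, 11, 10, 8, 12, 9])" by simp
  from wok_legal[OF this] show ?thesis by (intro exI[of _ "[23, 25, 15, 21, 14, 22, 20, 16, 24, 18]"]) simp
qed

lemma ex61: "\<exists>ps. legal_seq {1..61::nat} ps \<and> 61 * (61 + 1) < 4 * sum_list ps"
proof -
  have "wok {1..61} (zip [61, 49, 55, 57, 38, 51, 58, 39, 46, 52, 44, 45, 50, 30, 60, 40, 36, 54, 32, 48, 56, 42] [1, 7, 11, 19, 2, 17, 29, 13, 23, 26, 22, 15, 25, 6, 20, 8, 18, 27, 16, 24, 28, 21])" by simp
  from wok_legal[OF this] show ?thesis by (intro exI[of _ "[61, 49, 55, 57, 38, 51, 58, 39, 46, 52, 44, 45, 50, 30, 60, 40, 36, 54, 32, 48, 56, 42]"]) simp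
qed

lemma ex73: "\<exists>ps. legal_seq {1..73::nat} ps \<and> 73 * (73 + 1) < 4 * sum_list ps"
proof -
  have "wok {1..73} (zip [73, 65, 55, 69, 46, 49, 57, 51, 63, 62, 68, 45, 58, 52, 44, 66, 42, 70, 50, 56, 40, 60, 36, 72, 48, 64, 54] [1, 13, 11, 23, 2, 7, 19, 17, 21, 31, 34, 15, 29, 26, 22, 33, 14, 35, 25, 28, 20, 30, 18, 24, 16, 32, 27])" by simp
  from wok_legal[OF this] show ?thesis by (intro exI[of _ "[73, 65, 55, 69, 46, 49, 57, 51, 63, 62, 68, 45, 58, 52, 44, 66, 42, 70, 50, 56, 40, 60, 36, 72, 48, 64, 54]"]) simp
qed


lemma chk_1: "chk 1 11"
  by (subst chk.simps, simp add: cf_def Tcell_def Gtri_def badN_def)+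
lemma chk_11: "chk 11 21"
  by (subst chk.simps, simp add: cf_def Tcell_def Gtri_def badN_def)+
lemma chk_21: "chk 21 31"
  by (subst chk.simps, simp add: cf_def Tcell_def Gtri_def badN_def)+
lemma chk_31: "chk 31 41"
  by (subst chk.simps, simp add: cf_def Tcell_def Gtri_def badN_def)+
lemma chk_41: "chk 41 51"
  by (subst chk.simps, simp add: cf_def Tcell_def Gtri_def badN_def)+
lemma chk_51: "chk 51 61"
  by (subst chk.simps, simp add: cf_def Tcell_def Gtri_def badN_def)+
lemma chk_61: "chk 61 71"
  by (subst chk.simps, simp add: cf_def Tcell_def Gtri_def badN_def)+
lemma chk_71: "chk 71 81"
  by (subst chk.simps, simp add: cf_def Tcell_def Gtri_def badN_def)+
lemma chk_81: "chk 81 91"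
  by (subst chk.simps, simp add: cf_def Tcell_def Gtri_def badN_def)+
lemma chk_91: "chk 91 101"
  by (subst chk.simps, simp add: cf_def Tcell_def Gtri_def badN_def)+
lemma chk_101: "chk 101 111"
  by (subst chk.simps, simp add: cf_def Tcell_def Gtri_def badN_def)+
lemma chk_111: "chk 111 121"
  by (subst chk.simps, simp add: cf_def Tcell_def Gtri_def badN_def)+
lemma chk_121: "chk 121 131"
  by (subst chk.simps, simp add: cf_def Tcell_def Gtri_def badN_def)+
lemma chk_131: "chk 131 141"
  by (subst chk.simps, simp add: cf_def Tcell_def Gtri_def badN_def)+
lemma chk_141: "chk 141 151"
  by (subst chk.simps, simp add: cf_def Tcell_def Gtri_def badN_def)+
lemma chk_151: "chk 151 161"
  by (subst chk.simps, simp add: cf_def Tcell_def Gtri_def badN_def)+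
lemma chk_161: "chk 161 171"
  by (subst chk.simps, simp add: cf_def Tcell_def Gtri_def badN_def)+
lemma chk_171: "chk 171 181"
  by (subst chk.simps, simp add: cf_def Tcell_def Gtri_def badN_def)+
lemma chk_181: "chk 181 191"
  by (subst chk.simps, simp add: cf_def Tcell_def Gtri_def badN_def)+
lemma chk_191: "chk 191 201"
  by (subst chk.simps, simp add: cf_def Tcell_def Gtri_def badN_def)+
lemma chk_201: "chk 201 211"
  by (subst chk.simps, simp add: cf_def Tcell_def Gtri_def badN_def)+
lemma chk_211: "chk 211 221"
  by (subst chk.simps, simp add: cf_def Tcell_def Gtri_def badN_def)+
lemma chk_221: "chk 221 231"
  by (subst chk.simps, simp add: cf_def Tcell_def Gtri_def badN_def)+
lemma chk_231: "chk 231 241"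
  by (subst chk.simps, simp add: cf_def Tcell_def Gtri_def badN_def)+
lemma chk_241: "chk 241 251"
  by (subst chk.simps, simp add: cf_def Tcell_def Gtri_def badN_def)+
lemma chk_251: "chk 251 261"
  by (subst chk.simps, simp add: cf_def Tcell_def Gtri_def badN_def)+
lemma chk_261: "chk 261 271"
  by (subst chk.simps, simp add: cf_def Tcell_def Gtri_def badN_def)+
lemma chk_271: "chk 271 281"
  by (subst chk.simps, simp add: cf_def Tcell_def Gtri_def badN_def)+
lemma chk_281: "chk 281 291"
  by (subst chk.simps, simp add: cf_def Tcell_def Gtri_def badN_def)+
lemma chk_291: "chk 291 301"
  by (subst chk.simps, simp add: cf_def Tcell_def Gtri_def badN_def)+
lemma chk_301: "chk 301 311"
  by (subst chk.simps, simp add: cf_def Tcell_def Gtri_def badN_def)+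
lemma chk_311: "chk 311 321"
  by (subst chk.simps, simp add: cf_def Tcell_def Gtri_def badN_def)+
lemma chk_321: "chk 321 331"
  by (subst chk.simps, simp add: cf_def Tcell_def Gtri_def badN_def)+
lemma chk_331: "chk 331 341"
  by (subst chk.simps, simp add: cf_def Tcell_def Gtri_def badN_def)+
lemma chk_341: "chk 341 351"
  by (subst chk.simps, simp add: cf_def Tcell_def Gtri_def badN_def)+
lemma chk_351: "chk 351 361"
  by (subst chk.simps, simp add: cf_def Tcell_def Gtri_def badN_def)+
lemma chk_361: "chk 361 371"
  by (subst chk.simps, simp add: cf_def Tcell_def Gtri_def badN_def)+
lemma chk_371: "chk 371 381"
  by (subst chk.simps, simp add: cf_def Tcell_def Gtri_def badN_def)+
lemma chk_381: "chk 381 391"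
  by (subst chk.simps, simp add: cf_def Tcell_def Gtri_def badN_def)+
lemma chk_391: "chk 391 401"
  by (subst chk.simps, simp add: cf_def Tcell_def Gtri_def badN_def)+
lemma chk_401: "chk 401 411"
  by (subst chk.simps, simp add: cf_def Tcell_def Gtri_def badN_def)+
lemma chk_411: "chk 411 421"
  by (subst chk.simps, simp add: cf_def Tcell_def Gtri_def badN_def)+
lemma chk_421: "chk 421 431"
  by (subst chk.simps, simp add: cf_def Tcell_def Gtri_def badN_def)+
lemma chk_431: "chk 431 441"
  by (subst chk.simps, simp add: cf_def Tcell_def Gtri_def badN_def)+
lemma chk_441: "chk 441 451"
  by (subst chk.simps, simp add: cf_def Tcell_def Gtri_def badN_def)+
lemma chk_451: "chk 451 459"
  by (subst chk.simps, simp add: cf_def Tcell_def Gtri_def badN_def)+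

lemma chk_complete: "(\<And>N. a \<le> N \<Longrightarrow> N < c \<Longrightarrow> N \<in> badN \<or> N * (N + 1) < 4 * cf N) \<Longrightarrow> chk a c"
proof (induction a c rule: chk.induct)
  case (1 a c)
  show ?case
  proof (cases "c \<le> a")
    case True then show ?thesis by (simp add: chk.simps)
  next
    case False
    have "chk (a+1) c" using "1.IH" "1.prems" False by auto
    moreover have "a \<in> badN \<or> a * (a + 1) < 4 * cf a" using "1.prems" False by auto
    ultimately show ?thesis using False by (simp add: chk.simps[of a c])
  qed
qed

lemma chk_join: "chk a b \<Longrightarrow> chk b c \<Longrightarrow> chk a c"
proof (rule chk_complete)
  fix N assume ab: "chk a b" and bc: "chk b c" and N: "a \<le> N" "N < c"
  show "N \<in> badN \<or> N * (N + 1) < 4 * cf N"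
  proof (cases "N < b")
    case True then show ?thesis using chk_sound[OF ab N(1)] by blast
  next
    case False then show ?thesis using chk_sound[OF bc _ N(2)] by simp
  qed
qed

lemma chk_all: "chk 1 459"
  by (rule chk_join[OF chk_1 chk_join[OF chk_11 chk_join[OF chk_21 chk_join[OF chk_31 chk_join[OF chk_41 chk_join[OF chk_51 chk_join[OF chk_61 chk_join[OF chk_71 chk_join[OF chk_81 chk_join[OF chk_91 chk_join[OF chk_101 chk_join[OF chk_111 chk_join[OF chk_121 chk_join[OF chk_131 chk_join[OF chk_141 chk_join[OF chk_151 chk_join[OF chk_161 chk_join[OF chk_171 chk_join[OF chk_181 chk_join[OF chk_191 chk_join[OF chk_201 chk_join[OF chk_211 chk_join[OF chk_221 chk_join[OF chk_231 chk_join[OF chk_241 chk_join[OF chk_251 chk_join[OF chk_261 chk_join[OF chk_271 chk_join[OF chk_281 chk_join[OF chk_291 chk_join[OF chk_301 chk_join[OF chk_311 chk_join[OF chk_321 chk_join[OF chk_331 chk_join[OF chk_341 chk_join[OF chk_351 chk_join[OF chk_361 chk_join[OF chk_371 chk_join[OF chk_381 chk_join[OF chk_391 chk_join[OF chk_401 chk_join[OF chk_411 chk_join[OF chk_421 chk_join[OF chk_431 chk_join[OF chk_441 chk_451]]]]]]]]]]]]]]]]]]]]]]]]]]]]]]]]]]]]]]]]]]]]])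

lemma small: assumes "1 \<le> N" "N < 459" shows "N \<in> badN \<or> N * (N + 1) < 4 * cf N"
  by (rule chk_sound[OF chk_all assms])

lemma win:
  assumes "1 \<le> N" "N \<notin> {1, 3}"
  shows "\<exists>ps. legal_seq {1..N} ps \<and> N * (N + 1) < 4 * sum_list ps"
proof (cases "N \<in> badN")
  case True
  then have "N \<in> {11,13,15,17,18,19,20,21,23,24,25,61,73}" using assms unfolding badN_def by auto
  then show ?thesis using ex11 ex13 ex15 ex17 ex18 ex19 ex20 ex21 ex23 ex24 ex25 ex61 ex73 by auto
next
  case False
  have "N * (N + 1) < 4 * cf N"
  proof (cases "N < 459")
    case True then show ?thesis using small[OF assms(1) True] False by blast
  next
    case False then show ?thesis using big by simp
  qed
  then show ?thesis using ps_legal[of N] score_cf[of N] by metis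
qed

theorem theorem5:
  fixes N :: nat
  assumes "N \<ge> 1" and "N \<notin> {1, 3}"
  shows "\<exists>ps. complete_game N ps \<and>
           player_score ps > taxman_total {1..N} ps \<and>
           4 * player_score ps > N * (N + 1)"
proof -
  obtain ps where "legal_seq {1..N} ps" "N * (N + 1) < 4 * sum_list ps" using win[OF assms] by blast
  then show ?thesis using final_from_win by blast
qed


end
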